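(* Let $G=(V,w,m)$ be a locally finite weighted graph, let $x,z\in V$ with $d(x,z)=2$, and let $f:V\to\mathbb R$ satisfy $$\frac{f(x)+f(z)}2=\frac{\sum_{y:\,x\sim y\sim z}f(y)\,w(x,y)w(y,z)/m(y)}{\sum_{y:\,x\sim y\sim z}w(x,y)w(y,z)/m(y)}.$$ Then for every $r\neq0$, $\Gamma_2f(x)<\Gamma_2\big(f+r\mathbf 1_{\{z\}}\big)(x)$.
   Context: A weighted graph is $G=(V,w,m)$ with $V$ countable, $w:V\times V\to[0,\infty)$ symmetric with $w(x,x)=0$, $m:V\to(0,\infty)$; $x\sim y$ iff $w(x,y)>0$. Laplacian $\Delta f(x)=\frac1{m(x)}\sum_yw(x,y)(f(y)-f(x))$. $d$ is the combinatorial distance. $2\Gamma(f,g)=\Delta(fg)-f\Delta g-g\Delta f$, $2\Gamma_2(f,g)=\Delta\Gamma(f,g)-\Gamma(f,\Delta g)-\Gamma(g,\Delta f)$, $\Gamma_2f=\Gamma_2(f,f)$. $\mathbf 1_{\{z\}}$ is the indicator function of $\{z\}$. *)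

theory Defs
  imports "HOL-Analysis.Analysis" "HOL-Library.Extended_Nat"
begin

definition weighted_graph :: "('a::countable \<Rightarrow> 'a \<Rightarrow> real) \<Rightarrow> ('a \<Rightarrow> real) \<Rightarrow> bool" where
  "weighted_graph w m \<longleftrightarrow>
     (\<forall>x y. w x y = w y x) \<and> (\<forall>x y. 0 \<le> w x y) \<and> (\<forall>x. w x x = 0) \<and> (\<forall>x. 0 < m x)"

definition locally_finite :: "('a \<Rightarrow> 'a \<Rightarrow> real) \<Rightarrow> bool" where
  "locally_finite w \<longleftrightarrow> (\<forall>x. finite {y. 0 < w x y})"

definition lap :: "('a \<Rightarrow> 'a \<Rightarrow> real) \<Rightarrow> ('a \<Rightarrow> real) \<Rightarrow> ('a \<Rightarrow> real) \<Rightarrow> 'a \<Rightarrow> real" where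
  "lap w m f x = (1 / m x) * (\<Sum>y\<in>{y. 0 < w x y}. w x y * (f y - f x))"

definition Gam :: "('a \<Rightarrow> 'a \<Rightarrow> real) \<Rightarrow> ('a \<Rightarrow> real) \<Rightarrow> ('a \<Rightarrow> real) \<Rightarrow> ('a \<Rightarrow> real) \<Rightarrow> 'a \<Rightarrow> real" where
  "Gam w m f g x = (lap w m (\<lambda>v. f v * g v) x - f x * lap w m g x - g x * lap w m f x) / 2"

definition Gam2 :: "('a \<Rightarrow> 'a \<Rightarrow> real) \<Rightarrow> ('a \<Rightarrow> real) \<Rightarrow> ('a \<Rightarrow> real) \<Rightarrow> ('a \<Rightarrow> real) \<Rightarrow> 'a \<Rightarrow> real" where
  "Gam2 w m f g x = (lap w m (Gam w m f g) x - Gam w m f (lap w m g) x - Gam w m g (lap w m f) x) / 2"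

inductive walk :: "('a \<Rightarrow> 'a \<Rightarrow> real) \<Rightarrow> nat \<Rightarrow> 'a \<Rightarrow> 'a \<Rightarrow> bool" for w where
  walk0: "walk w 0 x x"
| walkS: "0 < w x y \<Longrightarrow> walk w n y z \<Longrightarrow> walk w (Suc n) x z"

definition comb_dist :: "('a \<Rightarrow> 'a \<Rightarrow> real) \<Rightarrow> 'a \<Rightarrow> 'a \<Rightarrow> enat" where
  "comb_dist w x y = (if \<exists>n. walk w n x y then enat (LEAST n. walk w n x y) else \<infinity>)"

end

theory Submission imports Defs begin

lemma Gam_eq: "Gam w m f g v = (\<Sum>u\<in>{u. 0 < w v u}. w v u * (f u - f v) * (g u - g v)) / (2 * m v)"
proof -
  let ?N = "{u. 0 < w v u}"
  have "(\<Sum>u\<in>?N. w v u * (f u * g u - f v * g v)) - f v * (\<Sum>u\<in>?N. w v u * (g u - g v))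
        - g v * (\<Sum>u\<in>?N. w v u * (f u - f v)) = (\<Sum>u\<in>?N. w v u * (f u - f v) * (g u - g v))"
    by (simp add: sum_distrib_left sum_subtractf[symmetric] algebra_simps)
  then show ?thesis unfolding Gam_def lap_def
    by (cases "m v = 0") (simp_all add: field_simps)
qed

lemma sum_lin: "(\<Sum>u\<in>A. a u + c * b u) = (\<Sum>u\<in>A. a u) + c * (\<Sum>u\<in>A. (b u::real))"
  by (simp add: sum.distrib sum_distrib_left)

lemma lap_lin: "lap w m (\<lambda>v. f v + c * h v) x = lap w m f x + c * lap w m h x"
proof -
  have "(\<Sum>y\<in>{y. 0 < w x y}. w x y * (f y + c * h y - (f x + c * h x)))
      = (\<Sum>y\<in>{y. 0 < w x y}. w x y * (f y - f x) + c * (w x y * (h y - h x)))"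
    by (rule sum.cong) (simp_all add: algebra_simps)
  then show ?thesis unfolding lap_def sum_lin by (simp add: algebra_simps)
qed

lemma lap_lin': "lap w m (\<lambda>v. f v + c * h v) = (\<lambda>x. lap w m f x + c * lap w m h x)"
  by (rule ext) (rule lap_lin)

lemma Gam_sym: "Gam w m f g = Gam w m g f"
  unfolding Gam_eq by (rule ext) (simp add: mult_ac)

lemma Gam_lin: "Gam w m (\<lambda>v. f v + c * h v) g = (\<lambda>x. Gam w m f g x + c * Gam w m h g x)"
proof
  fix v
  have "(\<Sum>u\<in>{u. 0 < w v u}. w v u * (f u + c * h u - (f v + c * h v)) * (g u - g v))
      = (\<Sum>u\<in>{u. 0 < w v u}. w v u * (f u - f v) * (g u - g v) + c * (w v u * (h u - h v) * (g u - g v)))"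
    by (rule sum.cong) (simp_all add: algebra_simps)
  then show "Gam w m (\<lambda>v. f v + c * h v) g v = Gam w m f g v + c * Gam w m h g v"
    unfolding Gam_eq sum_lin by (simp add: algebra_simps add_divide_distrib)
qed

lemma Gam_lin2: "Gam w m g (\<lambda>v. f v + c * h v) = (\<lambda>x. Gam w m g f x + c * Gam w m g h x)"
  by (metis Gam_sym Gam_lin)

lemma Gam2_lin: "Gam2 w m (\<lambda>v. f v + c * h v) g x = Gam2 w m f g x + c * Gam2 w m h g x"
  unfolding Gam2_def Gam_lin lap_lin' lap_lin Gam_lin2 by (simp add: field_simps)

lemma Gam2_sym: "Gam2 w m f g x = Gam2 w m g f x"
  unfolding Gam2_def by (simp add: Gam_sym algebra_simps)

inductive_cases walkSE: "walk w (Suc n) x z"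
inductive_cases walk0E: "walk w 0 x z"

lemma walk2: assumes "walk w (Suc (Suc 0)) x z" shows "\<exists>y. 0 < w x y \<and> 0 < w y z"
  using assms by (auto elim!: walkSE walk0E)

lemma dist2:
  assumes "comb_dist w x z = 2"
  shows "x \<noteq> z" "\<not> 0 < w x z" "\<exists>y. 0 < w x y \<and> 0 < w y z"
proof -
  have ex: "\<exists>n. walk w n x z"
    using assms unfolding comb_dist_def by (metis infinity_ne_i1 numeral_ne_infinity)
  then have L: "(LEAST n. walk w n x z) = 2"
    using assms unfolding comb_dist_def by (simp, metis enat.inject enat_numeral)
  show "x \<noteq> z"
  proof
    assume "x = z"
    then have "walk w 0 x z" by (simp add: walk0)
    then have "(LEAST n. walk w n x z) \<le> 0" by (rule Least_le)
    with L show False by simp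
  qed
  show "\<not> 0 < w x z"
  proof
    assume "0 < w x z"
    then have "walk w 1 x z" using walkS[OF _ walk0] by simp
    then have "(LEAST n. walk w n x z) \<le> 1" by (rule Least_le)
    with L show False by simp
  qed
  have "walk w (LEAST n. walk w n x z) x z" using ex by (rule LeastI_ex)
  then have "walk w (Suc (Suc 0)) x z" using L by (simp add: numeral_2_eq_2)
  then show "\<exists>y. 0 < w x y \<and> 0 < w y z" by (rule walk2)
qed

theorem lemma3:
  fixes w :: "'a::countable \<Rightarrow> 'a \<Rightarrow> real" and m :: "'a \<Rightarrow> real"
    and f :: "'a \<Rightarrow> real" and x z :: 'a
  assumes "weighted_graph w m"
    and "locally_finite w"
    and "comb_dist w x z = 2"
    and "(f x + f z) / 2 =
           (\<Sum>y\<in>{y. 0 < w x y \<and> 0 < w y z}. f y * w x y * w y z / m y) /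
           (\<Sum>y\<in>{y. 0 < w x y \<and> 0 < w y z}. w x y * w y z / m y)"
  shows "\<forall>r::real. r \<noteq> 0 \<longrightarrow>
           Gam2 w m f f x < Gam2 w m (\<lambda>v. f v + r * indicator {z} v) (\<lambda>v. f v + r * indicator {z} v) x"
proof (intro allI impI)
  fix r :: real assume r: "r \<noteq> 0"
  define e where "e = (indicator {z} :: 'a \<Rightarrow> real)"
  define S where "S = {y. 0 < w x y \<and> 0 < w y z}"
  have nn: "\<And>a b. 0 \<le> w a b" and mpos: "\<And>a. 0 < m a"
    using assms(1) unfolding weighted_graph_def by auto
  have mne: "\<And>a. m a \<noteq> 0" using mpos by (metis less_irrefl)
  have fin: "\<And>v. finite {u. 0 < w v u}" using assms(2) unfolding locally_finite_def by auto
  have xz: "x \<noteq> z" and nxz: "\<not> 0 < w x z" and Sne: "S \<noteq> {}"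
    using dist2[OF assms(3)] unfolding S_def by auto
  have SN: "S \<subseteq> {y. 0 < w x y}" unfolding S_def by auto
  have finS: "finite S" using fin SN finite_subset by blast
  have ex: "e x = 0" using xz unfolding e_def by simp
  have ey: "\<And>y. 0 < w x y \<Longrightarrow> e y = 0" using nxz unfolding e_def by (auto simp: indicator_def)
  have ez: "e z = 1" unfolding e_def by simp
  have Gex1: "Gam w m h e x = 0" for h
    unfolding Gam_eq by (simp add: ex ey)
  have Gex2: "Gam w m e h x = 0" for h
    unfolding Gam_eq by (simp add: ex ey)
  have lex: "lap w m e x = 0" unfolding lap_def by (simp add: ex ey)
  have sumz: "(\<Sum>u\<in>{u. 0 < w y u}. w y u * e u * t u) = w y z * t z" for y t
  proof -
    have "(\<Sum>u\<in>{u. 0 < w y u}. w y u * e u * t u) = (\<Sum>u\<in>{u. 0 < w y u}. if u = z then w y z * t z else 0)"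
      by (rule sum.cong) (auto simp: e_def)
    also have "\<dots> = w y z * t z"
      using fin[of y] nn[of y z] by (simp add: sum.delta')
    finally show ?thesis .
  qed
  have ley: "lap w m e y = w y z / m y" if "0 < w x y" for y
  proof -
    have "lap w m e y = (1 / m y) * (\<Sum>u\<in>{u. 0 < w y u}. w y u * e u * 1)"
      unfolding lap_def using ey[OF that] by simp
    then show ?thesis using sumz[of y "\<lambda>_. 1"] by simp
  qed
  have Gey: "Gam w m h e y = w y z * (h z - h y) / (2 * m y)" if "0 < w x y" for y h
  proof -
    have "(\<Sum>u\<in>{u. 0 < w y u}. w y u * (h u - h y) * (e u - e y))
        = (\<Sum>u\<in>{u. 0 < w y u}. w y u * e u * (h u - h y))"
      using ey[OF that] by (intro sum.cong) (simp_all add: algebra_simps)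
    then show ?thesis unfolding Gam_eq using sumz[of y "\<lambda>u. h u - h y"] by simp
  qed
  have Gey': "Gam w m e h y = w y z * (h z - h y) / (2 * m y)" if "0 < w x y" for y h
    using Gey[OF that] Gam_sym by metis
  have conv: "(\<Sum>y\<in>{y. 0 < w x y}. w x y * w y z * t y) = (\<Sum>y\<in>S. w x y * w y z * t y)" for t
    by (rule sum.mono_neutral_right[OF fin SN]) (auto simp: S_def less_le nn)
  define Q where "Q = (\<Sum>y\<in>S. w x y * w y z * ((f z + f x - 2 * f y) / m y))"
  have l1: "lap w m (Gam w m f e) x = (1 / m x) * (\<Sum>y\<in>S. w x y * w y z * ((f z - f y) / (2 * m y)))"
  proof -
    have "(\<Sum>y\<in>{y. 0 < w x y}. w x y * (Gam w m f e y - Gam w m f e x))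
        = (\<Sum>y\<in>{y. 0 < w x y}. w x y * w y z * ((f z - f y) / (2 * m y)))"
      by (intro sum.cong) (simp_all add: Gey Gex1)
    then show ?thesis unfolding lap_def conv by simp
  qed
  have l2: "Gam w m f (lap w m e) x = (\<Sum>y\<in>S. w x y * w y z * ((f y - f x) / m y)) / (2 * m x)"
  proof -
    have "(\<Sum>y\<in>{y. 0 < w x y}. w x y * (f y - f x) * (lap w m e y - lap w m e x))
        = (\<Sum>y\<in>{y. 0 < w x y}. w x y * w y z * ((f y - f x) / m y))"
      by (intro sum.cong) (simp_all add: ley lex)
    then show ?thesis unfolding Gam_eq conv by simp
  qed
  have Qsplit: "Q = 2 * (\<Sum>y\<in>S. w x y * w y z * ((f z - f y) / (2 * m y))) - (\<Sum>y\<in>S. w x y * w y z * ((f y - f x) / m y))"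
  proof -
    have "Q = (\<Sum>y\<in>S. 2 * (w x y * w y z * ((f z - f y) / (2 * m y))) - w x y * w y z * ((f y - f x) / m y))"
      unfolding Q_def by (intro sum.cong) (simp_all add: field_simps mne)
    then show ?thesis by (simp add: sum_subtractf sum_distrib_left)
  qed
  have Gfe: "Gam2 w m f e x = Q / (4 * m x)"
    unfolding Gam2_def l1 l2 Gex2 Qsplit using mpos[of x] by (simp add: field_simps)
  define A where "A = (\<Sum>y\<in>S. w x y * w y z / m y)"
  define B where "B = (\<Sum>y\<in>S. f y * w x y * w y z / m y)"
  have Apos: "0 < A" unfolding A_def
    by (rule sum_pos[OF finS Sne]) (auto simp: S_def mpos)
  have QAB: "Q = (f z + f x) * A - 2 * B"
  proof -
    have "Q = (\<Sum>y\<in>S. (f z + f x) * (w x y * w y z / m y) - 2 * (f y * w x y * w y z / m y))"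
      unfolding Q_def by (intro sum.cong) (simp_all add: field_simps mne)
    then show ?thesis unfolding A_def B_def by (simp add: sum_subtractf sum_distrib_left)
  qed
  have "(f x + f z) / 2 = B / A" using assms(4) unfolding A_def B_def S_def by simp
  then have "B = A * (f x + f z) / 2" using Apos by (simp add: field_simps)
  then have Q0: "Q = 0" unfolding QAB by (simp add: algebra_simps)
  have l3: "lap w m (Gam w m e e) x = (1 / m x) * (\<Sum>y\<in>S. w x y * w y z * (1 / (2 * m y)))"
  proof -
    have "(\<Sum>y\<in>{y. 0 < w x y}. w x y * (Gam w m e e y - Gam w m e e x))
        = (\<Sum>y\<in>{y. 0 < w x y}. w x y * w y z * (1 / (2 * m y)))"
      by (intro sum.cong) (simp_all add: Gey Gex1 ez ey)
    then show ?thesis unfolding lap_def conv by simp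
  qed
  have Gee: "Gam2 w m e e x = (1 / m x) * (\<Sum>y\<in>S. w x y * w y z * (1 / (2 * m y))) / 2"
    unfolding Gam2_def l3 Gex2 by simp
  have Geepos: "0 < Gam2 w m e e x"
    unfolding Gee using mpos[of x]
    by (intro divide_pos_pos mult_pos_pos sum_pos[OF finS Sne]) (auto simp: S_def mpos)
  have g: "(\<lambda>v. f v + r * indicator {z} v) = (\<lambda>v. f v + r * e v)" unfolding e_def ..
  have "Gam2 w m (\<lambda>v. f v + r * e v) (\<lambda>v. f v + r * e v) x
      = Gam2 w m f f x + r * Gam2 w m f e x + r * (Gam2 w m e f x + r * Gam2 w m e e x)"
    by (simp add: Gam2_lin Gam2_sym[of w m _ "\<lambda>v. f v + r * e v"] algebra_simps)
  also have "\<dots> = Gam2 w m f f x + r * r * Gam2 w m e e x"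
    using Gam2_sym[of w m e f x] Gfe Q0 by (simp add: algebra_simps)
  finally show "Gam2 w m f f x < Gam2 w m (\<lambda>v. f v + r * indicator {z} v) (\<lambda>v. f v + r * indicator {z} v) x"
    unfolding g using Geepos r by (simp add: mult_pos_pos not_square_less_zero less_le)
qed

end
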